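(* Let $A\subset\mathbb T^2$ be a measurable set and $\Gamma_A:=\{\gamma\in\Gamma:\ \mathscr L^1(\{t\in[0,T]:\gamma(t)\in A\})>0\}$. Then $\mathscr L^2(A)=0$ if and only if $\eta(\Gamma_A)=0$.
   Context: $T>0$, $\mathbb T^2=\mathbb R^2/\mathbb Z^2$, $b\colon\mathbb T^2\to\mathbb R^2$ is a bounded, everywhere defined Borel vector field with $b\in\mathrm{BV}(\mathbb T^2)$, nearly incompressible with density $\rho$: $\ln\rho\in L^\infty((0,T)\times\mathbb T^2)$ and $\partial_t\rho+\mathrm{div}(\rho b)=0$ in $\mathscr D'((0,T)\times\mathbb T^2)$. $\Gamma:=C([0,T];\mathbb T^2)$, $e_t(\gamma)=\gamma(t)$. $\eta$ is a positive finite Borel measure on $\Gamma$, concentrated on curves with $\gamma(t)=\gamma(0)+\int_0^tb(\gamma(\tau))d\tau$, such that $(e_t)_\#\eta=\rho(t,\cdot)\mathscr L^2$ for every $t\in[0,T]$. *)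

theory Defs
  imports "HOL-Analysis.Analysis"
begin

text \<open>The flat torus T^2 = R^2/Z^2 is represented by its fundamental domain [0,1)^2;
  points of R^2 are projected to it by taking fractional parts.\<close>

definition torus :: "(real \<times> real) set" where
  "torus = {0..<1} \<times> {0..<1}"

definition tproj :: "real \<times> real \<Rightarrow> real \<times> real" where
  "tproj x = (frac (fst x), frac (snd x))"

definition periodic2 :: "(real \<times> real \<Rightarrow> 'b) \<Rightarrow> bool" where
  "periodic2 f \<longleftrightarrow> (\<forall>x (m::int) (n::int). f (fst x + of_int m, snd x + of_int n) = f x)"

text \<open>Standard embedding of T^2 into R^4; it induces the topology of T^2.\<close>
definition temb :: "real \<times> real \<Rightarrow> real \<times> real \<times> real \<times> real" where
  "temb x = (cos (2 * pi * fst x), sin (2 * pi * fst x), cos (2 * pi * snd x), sin (2 * pi * snd x))"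

text \<open>C-infinity: all iterated partial derivatives exist everywhere.\<close>
definition smooth :: "('a::euclidean_space \<Rightarrow> 'b::real_normed_vector) \<Rightarrow> bool" where
  "smooth f \<longleftrightarrow> (\<exists>S. f \<in> S \<and> (\<forall>g\<in>S. (\<forall>x. g differentiable (at x)) \<and>
       (\<forall>v\<in>Basis. (\<lambda>x. frechet_derivative g (at x) v) \<in> S)))"

definition div2 :: "(real \<times> real \<Rightarrow> real \<times> real) \<Rightarrow> real \<times> real \<Rightarrow> real" where
  "div2 \<phi> x = fst (frechet_derivative \<phi> (at x) (1,0)) + snd (frechet_derivative \<phi> (at x) (0,1))"

text \<open>b in BV(T^2): b in L^1(T^2) with finite total variation
  sup { sum_i int_{T^2} b_i div phi_i : phi in C^infinity(T^2; R^{2x2}), |phi| <= 1 }.\<close>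
definition BV_torus :: "(real \<times> real \<Rightarrow> real \<times> real) \<Rightarrow> bool" where
  "BV_torus b \<longleftrightarrow> set_integrable lborel torus b \<and>
     (\<exists>V::real. \<forall>\<phi>1 \<phi>2 :: real \<times> real \<Rightarrow> real \<times> real.
        smooth \<phi>1 \<and> smooth \<phi>2 \<and> periodic2 \<phi>1 \<and> periodic2 \<phi>2 \<and>
        (\<forall>x. (norm (\<phi>1 x))\<^sup>2 + (norm (\<phi>2 x))\<^sup>2 \<le> 1) \<longrightarrow>
        (\<integral>x. indicator torus x * (fst (b x) * div2 \<phi>1 x + snd (b x) * div2 \<phi>2 x) \<partial>lborel) \<le> V)"

text \<open>Test functions C_c^infinity((0,T) x T^2), as functions of (t,x) periodic in x.\<close>
definition test_fun :: "real \<Rightarrow> (real \<times> (real \<times> real) \<Rightarrow> real) \<Rightarrow> bool" where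
  "test_fun T \<phi> \<longleftrightarrow> smooth \<phi> \<and> (\<forall>t. periodic2 (\<lambda>x. \<phi> (t, x))) \<and>
     (\<exists>a c. 0 < a \<and> c < T \<and> (\<forall>t x. t \<notin> {a..c} \<longrightarrow> \<phi> (t, x) = 0))"

text \<open>Distributional continuity equation d_t rho + div (rho b) = 0 on (0,T) x T^2.\<close>
definition continuity_eq :: "real \<Rightarrow> (real \<times> real \<Rightarrow> real \<times> real) \<Rightarrow> (real \<Rightarrow> real \<times> real \<Rightarrow> real) \<Rightarrow> bool" where
  "continuity_eq T b \<rho> \<longleftrightarrow> (\<forall>\<phi>. test_fun T \<phi> \<longrightarrow>
     (\<integral>p. indicator ({0<..<T} \<times> torus) p * \<rho> (fst p) (snd p) *
        (frechet_derivative \<phi> (at p) (1, 0, 0) + frechet_derivative \<phi> (at p) (0, b (snd p))) \<partial>lborel) = 0)"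

text \<open>The curve space Gamma = C([0,T]; T^2); curves are extended by (0,0) outside [0,T].\<close>
definition Gamma :: "real \<Rightarrow> (real \<Rightarrow> real \<times> real) set" where
  "Gamma T = {\<gamma>. (\<forall>t\<in>{0..T}. \<gamma> t \<in> torus) \<and> continuous_on {0..T} (temb \<circ> \<gamma>) \<and>
                 (\<forall>t. t \<notin> {0..T} \<longrightarrow> \<gamma> t = (0, 0))}"

definition gdist :: "real \<Rightarrow> (real \<Rightarrow> real \<times> real) \<Rightarrow> (real \<Rightarrow> real \<times> real) \<Rightarrow> real" where
  "gdist T \<gamma> \<delta> = (SUP t\<in>{0..T}. dist (temb (\<gamma> t)) (temb (\<delta> t)))"

definition Gamma_open :: "real \<Rightarrow> (real \<Rightarrow> real \<times> real) set \<Rightarrow> bool" where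
  "Gamma_open T U \<longleftrightarrow> U \<subseteq> Gamma T \<and>
     (\<forall>\<gamma>\<in>U. \<exists>e>0. \<forall>\<delta>\<in>Gamma T. gdist T \<gamma> \<delta> < e \<longrightarrow> \<delta> \<in> U)"

definition Gamma_borel :: "real \<Rightarrow> (real \<Rightarrow> real \<times> real) measure" where
  "Gamma_borel T = sigma (Gamma T) {U. Gamma_open T U}"

definition Gamma_A :: "real \<Rightarrow> (real \<times> real) set \<Rightarrow> (real \<Rightarrow> real \<times> real) set" where
  "Gamma_A T A = {\<gamma> \<in> Gamma T. emeasure lborel {t \<in> {0..T}. \<gamma> t \<in> A} > 0}"

end

theory Submission
  imports Defs
begin


lemma norm_temb: "norm (temb x) = sqrt 2"
  unfolding temb_def by (simp add: norm_Pair)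

lemma dist_temb_le: "dist (temb x) (temb y) \<le> 2 * sqrt 2"
  using norm_triangle_ineq4[of "temb x" "temb y"] by (simp add: dist_norm norm_temb)

lemma dist_le_gdist:
  assumes "t \<in> {0..T}" shows "dist (temb (\<gamma> t)) (temb (\<delta> t)) \<le> gdist T \<gamma> \<delta>"
  unfolding gdist_def
  by (rule cSUP_upper[OF assms]) (auto intro!: bdd_aboveI[where M="2*sqrt 2"] dist_temb_le)

lemma space_GB: "space (Gamma_borel T) = Gamma T"
  unfolding Gamma_borel_def by (simp add: space_measure_of_conv)

lemma sets_GB: "sets (Gamma_borel T) = sigma_sets (Gamma T) {U. Gamma_open T U}"
  unfolding Gamma_borel_def by (rule sets_measure_of) (auto simp: Gamma_open_def)

lemma temb_ev_meas:
  assumes "sets M = sets (Gamma_borel T)" "t \<in> {0..T}"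
  shows "(\<lambda>\<gamma>. temb (\<gamma> t)) \<in> borel_measurable M"
proof (rule borel_measurableI)
  fix S :: "(real \<times> real \<times> real \<times> real) set" assume S: "open S"
  have sp: "space M = Gamma T" using sets_eq_imp_space_eq[OF assms(1)] space_GB by simp
  have "Gamma_open T ((\<lambda>\<gamma>. temb (\<gamma> t)) -` S \<inter> Gamma T)"
    unfolding Gamma_open_def
  proof (intro conjI ballI)
    fix \<gamma> assume "\<gamma> \<in> (\<lambda>\<gamma>. temb (\<gamma> t)) -` S \<inter> Gamma T"
    then have g: "\<gamma> \<in> Gamma T" "temb (\<gamma> t) \<in> S" by auto
    then obtain e where e: "e > 0" "ball (temb (\<gamma> t)) e \<subseteq> S" using S open_contains_ball by blast
    show "\<exists>e>0. \<forall>\<delta>\<in>Gamma T. gdist T \<gamma> \<delta> < e \<longrightarrow> \<delta> \<in> (\<lambda>\<gamma>. temb (\<gamma> t)) -` S \<inter> Gamma T"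
    proof (intro exI[of _ e] conjI ballI impI)
      fix \<delta> assume "\<delta> \<in> Gamma T" "gdist T \<gamma> \<delta> < e"
      then have "dist (temb (\<gamma> t)) (temb (\<delta> t)) < e" using dist_le_gdist[OF assms(2), of \<gamma> \<delta>] by simp
      then show "\<delta> \<in> (\<lambda>\<gamma>. temb (\<gamma> t)) -` S \<inter> Gamma T" using e \<open>\<delta> \<in> Gamma T\<close> by auto
    qed (use e in auto)
  qed auto
  then show "(\<lambda>\<gamma>. temb (\<gamma> t)) -` S \<inter> space M \<in> sets M"
    unfolding assms(1) sets_GB sp by auto
qed



definition ang :: "real \<Rightarrow> real \<Rightarrow> real" where
  "ang a b = (if 0 \<le> b then arccos (max (-1) (min 1 a)) / (2*pi) else 1 - arccos (max (-1) (min 1 a)) / (2*pi))"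

definition tinv :: "real \<times> real \<times> real \<times> real \<Rightarrow> real \<times> real" where
  "tinv p = (case p of (a,b,c,d) \<Rightarrow> (ang a b, ang c d))"

lemma arccos_clip_meas: "(\<lambda>a::real. arccos (max (-1) (min 1 a))) \<in> borel_measurable borel"
  by (rule borel_measurable_continuous_onI) (auto intro!: continuous_intros)

lemma ang_meas[measurable (raw)]:
  assumes [measurable]: "f \<in> borel_measurable M" "g \<in> borel_measurable M"
  shows "(\<lambda>x. ang (f x) (g x)) \<in> borel_measurable M"
proof -
  have [measurable]: "(\<lambda>x. arccos (max (-1) (min 1 (f x)))) \<in> borel_measurable M"
    using measurable_comp[OF assms(1) arccos_clip_meas] by (simp add: comp_def)
  show ?thesis unfolding ang_def by measurable
qed

lemma tinv_meas: "tinv \<in> borel_measurable borel"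
proof -
  have "tinv = (\<lambda>p. (ang (fst p) (fst (snd p)), ang (fst (snd (snd p))) (snd (snd (snd p)))))"
    by (auto simp: tinv_def split: prod.splits)
  also have "\<dots> \<in> borel_measurable borel"
    by (intro borel_measurable_Pair ang_meas borel_measurable_continuous_onI continuous_intros)
  finally show ?thesis .
qed

lemma ang_cos_sin: assumes "0 \<le> u" "u < 1" shows "ang (cos (2*pi*u)) (sin (2*pi*u)) = u"
proof (cases "u \<le> 1/2")
  case True
  have "0 \<le> sin (2*pi*u)" by (rule sin_ge_zero) (use assms True in auto)
  moreover have "arccos (cos (2*pi*u)) = 2*pi*u" by (rule arccos_cos) (use assms True in auto)
  ultimately show ?thesis by (simp add: ang_def)
next
  case False
  have "sin (2*pi*u) < 0" by (rule sin_lt_zero) (use assms False in auto)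
  moreover have "cos (2*pi*u) = cos (2*pi*(1-u))"
    by (metis cos_2pi_minus right_diff_distrib' mult.right_neutral)
  moreover have "arccos (cos (2*pi*(1-u))) = 2*pi*(1-u)" by (rule arccos_cos) (use assms False in auto)
  ultimately show ?thesis by (simp add: ang_def)
qed

lemma tinv_temb: "x \<in> torus \<Longrightarrow> tinv (temb x) = x"
  by (cases x) (auto simp: tinv_def temb_def torus_def ang_cos_sin)



definition clamp :: "real \<Rightarrow> real \<Rightarrow> real" where
  "clamp T t = max 0 (min T t)"

lemma clamp_in: "0 \<le> T \<Longrightarrow> clamp T t \<in> {0..T}"
  by (auto simp: clamp_def)

lemma clamp_id: "t \<in> {0..T} \<Longrightarrow> clamp T t = t"
  by (auto simp: clamp_def)

lemma floor_approx: "(\<lambda>n. of_int \<lfloor>real (Suc n) * t\<rfloor> / real (Suc n)) \<longlonglongrightarrow> t"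
proof (rule real_tendsto_sandwich[where f="\<lambda>n. t - 1 / real (Suc n)" and h="\<lambda>n. t"])
  show "\<forall>\<^sub>F n in sequentially. t - 1 / real (Suc n) \<le> of_int \<lfloor>real (Suc n) * t\<rfloor> / real (Suc n)"
  proof (intro always_eventually allI)
    fix n
    have "real (Suc n) * t - 1 \<le> of_int \<lfloor>real (Suc n) * t\<rfloor>" by linarith
    then have "(real (Suc n) * t - 1) / real (Suc n) \<le> of_int \<lfloor>real (Suc n) * t\<rfloor> / real (Suc n)"
      by (rule divide_right_mono) simp
    moreover have "t - 1 / real (Suc n) = (real (Suc n) * t - 1) / real (Suc n)"
      by (simp add: field_simps)
    ultimately show "t - 1 / real (Suc n) \<le> of_int \<lfloor>real (Suc n) * t\<rfloor> / real (Suc n)"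
      by simp
  qed
  show "\<forall>\<^sub>F n in sequentially. of_int \<lfloor>real (Suc n) * t\<rfloor> / real (Suc n) \<le> t"
  proof (intro always_eventually allI)
    fix n
    have "of_int \<lfloor>real (Suc n) * t\<rfloor> \<le> real (Suc n) * t" by linarith
    then show "of_int \<lfloor>real (Suc n) * t\<rfloor> / real (Suc n) \<le> t"
      by (simp add: field_simps)
  qed
  show "(\<lambda>n. t - 1 / real (Suc n)) \<longlonglongrightarrow> t"
    using tendsto_diff[OF tendsto_const[of t] LIMSEQ_inverse_real_of_nat] by (simp add: inverse_eq_divide)
qed simp

lemma H_meas:
  assumes sM: "sets M = sets (Gamma_borel T)" and T: "T > 0"
  shows "(\<lambda>p. temb (snd p (clamp T (fst p)))) \<in> borel_measurable (lborel \<Otimes>\<^sub>M M)"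
proof -
  have sp: "space M = Gamma T" using sets_eq_imp_space_eq[OF sM] space_GB by simp
  define F where "F n p = temb (snd p (clamp T (of_int \<lfloor>real (Suc n) * fst p\<rfloor> / real (Suc n))))" for n p
  have fm: "F n \<in> borel_measurable (lborel \<Otimes>\<^sub>M M)" for n
  proof -
    let ?f = "\<lambda>(i::int) p. temb (snd p (clamp T (of_int i / real (Suc n))))"
    have f1: "\<And>i. ?f i \<in> borel_measurable (lborel \<Otimes>\<^sub>M M)"
      using measurable_compose[OF measurable_snd temb_ev_meas[OF sM clamp_in]] T by simp
    have g1: "(\<lambda>p. \<lfloor>real (Suc n) * fst p\<rfloor>) \<in> lborel \<Otimes>\<^sub>M M \<rightarrow>\<^sub>M count_space UNIV"
      by measurable
    from measurable_compose_countable[OF f1 g1] show ?thesis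
      by (simp add: F_def[abs_def])
  qed
  have lim: "(\<lambda>n. F n p) \<longlonglongrightarrow> temb (snd p (clamp T (fst p)))" if "p \<in> space (lborel \<Otimes>\<^sub>M M)" for p
  proof -
    from that have g: "snd p \<in> Gamma T" by (auto simp: space_pair_measure sp)
    then have c: "continuous_on {0..T} (temb \<circ> snd p)" by (auto simp: Gamma_def)
    have cl: "continuous_on UNIV (clamp T)" unfolding clamp_def by (intro continuous_intros)
    have l: "(\<lambda>n. clamp T (of_int \<lfloor>real (Suc n) * fst p\<rfloor> / real (Suc n))) \<longlonglongrightarrow> clamp T (fst p)"
      using continuous_on_tendsto_compose[OF cl floor_approx] by simp
    show ?thesis
      using continuous_on_tendsto_compose[OF c l] clamp_in T by (simp add: comp_def F_def)
  qed
  show ?thesis by (rule borel_measurable_LIMSEQ_metric[OF fm lim])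
qed



lemma torus_borel[measurable]: "torus \<in> sets borel"
  unfolding torus_def borel_prod[symmetric] by (intro pair_measureI) auto

theorem mainTheorem8:
  fixes T :: real
    and b :: "real \<times> real \<Rightarrow> real \<times> real"
    and \<rho> :: "real \<Rightarrow> real \<times> real \<Rightarrow> real"
    and \<eta> :: "(real \<Rightarrow> real \<times> real) measure"
    and A :: "(real \<times> real) set"
  assumes T_pos: "T > 0"
    and b_borel: "b \<in> borel_measurable borel"
    and b_bounded: "\<exists>M. \<forall>x\<in>torus. norm (b x) \<le> M"
    and b_BV: "BV_torus b"
    and rho_meas: "(\<lambda>p. \<rho> (fst p) (snd p)) \<in> borel_measurable lebesgue"
    and ln_rho_Linf: "\<exists>C. AE p in lborel. p \<in> {0<..<T} \<times> torus \<longrightarrow>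
                         \<rho> (fst p) (snd p) > 0 \<and> \<bar>ln (\<rho> (fst p) (snd p))\<bar> \<le> C"
    and cont_eq: "continuity_eq T b \<rho>"
    and eta_sets: "sets \<eta> = sets (Gamma_borel T)"
    and eta_finite: "finite_measure \<eta>"
    and eta_ode: "AE \<gamma> in \<eta>. \<forall>t\<in>{0..T}.
                    \<gamma> t = tproj (\<gamma> 0 + integral {0..t} (\<lambda>\<tau>. b (\<gamma> \<tau>)))"
    and eta_marg: "\<forall>t\<in>{0..T}. distr \<eta> borel (\<lambda>\<gamma>. \<gamma> t) =
                     density lborel (\<lambda>x. indicator torus x * ennreal (\<rho> t x))"
    and A_sub: "A \<subseteq> torus"
    and A_meas: "A \<in> sets borel"
  shows "emeasure lborel A = 0 \<longleftrightarrow> emeasure \<eta> (Gamma_A T A) = 0"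
proof -
  interpret E: finite_measure \<eta> by fact
  interpret P: pair_sigma_finite lborel \<eta> ..
  have sp: "space \<eta> = Gamma T" using sets_eq_imp_space_eq[OF eta_sets] space_GB by simp
  have ev_meas: "(\<lambda>\<gamma>. \<gamma> t) \<in> \<eta> \<rightarrow>\<^sub>M borel" if t: "t \<in> {0..T}" for t
  proof -
    have "(\<lambda>\<gamma>. tinv (temb (\<gamma> t))) \<in> \<eta> \<rightarrow>\<^sub>M borel"
      using measurable_compose[OF temb_ev_meas[OF eta_sets t] tinv_meas] by (simp add: comp_def)
    moreover have "\<gamma> \<in> space \<eta> \<Longrightarrow> tinv (temb (\<gamma> t)) = \<gamma> t" for \<gamma>
      using t by (auto simp: sp Gamma_def tinv_temb)
    ultimately show ?thesis by (simp cong: measurable_cong)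
  qed
  define K :: "real \<Rightarrow> (real \<Rightarrow> real \<times> real) \<Rightarrow> ennreal" where
    "K t \<gamma> = indicator {0..T} t * indicator A (\<gamma> t)" for t \<gamma>
  have K_meas: "(\<lambda>p. K (fst p) (snd p)) \<in> borel_measurable (lborel \<Otimes>\<^sub>M \<eta>)"
  proof -
    note [measurable] = H_meas[OF eta_sets T_pos] tinv_meas A_meas
    have "(\<lambda>p. indicator {0..T} (fst p) * indicator A (tinv (temb (snd p (clamp T (fst p)))))
          :: ennreal) \<in> borel_measurable (lborel \<Otimes>\<^sub>M \<eta>)"
      by measurable
    moreover have "indicator {0..T} (fst p) * indicator A (tinv (temb (snd p (clamp T (fst p))))) = K (fst p) (snd p)"
      if "p \<in> space (lborel \<Otimes>\<^sub>M \<eta>)" for p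
    proof (cases "fst p \<in> {0..T}")
      case True
      with that have "snd p (fst p) \<in> torus" by (auto simp: space_pair_measure sp Gamma_def)
      with True show ?thesis by (simp add: K_def clamp_id tinv_temb)
    qed (simp add: K_def)
    ultimately show ?thesis by (simp cong: measurable_cong)
  qed
  have K_meas': "case_prod K \<in> borel_measurable (lborel \<Otimes>\<^sub>M \<eta>)"
    using K_meas by (simp add: case_prod_beta')
  define L where "L \<gamma> = (\<integral>\<^sup>+ t. K t \<gamma> \<partial>lborel)" for \<gamma>
  define R where "R t = (\<integral>\<^sup>+ \<gamma>. K t \<gamma> \<partial>\<eta>)" for t
  have L_meas: "L \<in> borel_measurable \<eta>"
  proof -
    have "(\<lambda>p. K (snd p) (fst p)) \<in> borel_measurable (\<eta> \<Otimes>\<^sub>M lborel)"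
      using measurable_compose[OF measurable_pair_swap' K_meas] by (simp add: comp_def case_prod_beta)
    then have "case_prod (\<lambda>\<gamma> t. K t \<gamma>) \<in> borel_measurable (\<eta> \<Otimes>\<^sub>M lborel)"
      by (simp add: case_prod_beta')
    from lborel.borel_measurable_nn_integral[OF this] show ?thesis
      by (simp add: L_def[abs_def])
  qed
  have R_meas: "R \<in> borel_measurable lborel"
    using E.borel_measurable_nn_integral[OF K_meas'] by (simp add: R_def[abs_def])
  have fub: "(\<integral>\<^sup>+ \<gamma>. L \<gamma> \<partial>\<eta>) = (\<integral>\<^sup>+ t. R t \<partial>lborel)"
    unfolding L_def R_def by (rule P.Fubini'[OF K_meas'])
  have L_eq: "L \<gamma> = emeasure lborel {t\<in>{0..T}. \<gamma> t \<in> A}" if "\<gamma> \<in> space \<eta>" for \<gamma>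
  proof -
    have "(\<lambda>t. (t, \<gamma>)) \<in> lborel \<rightarrow>\<^sub>M lborel \<Otimes>\<^sub>M \<eta>"
      using that by measurable
    from measurable_compose[OF this K_meas]
    have m: "(\<lambda>t. K t \<gamma>) \<in> borel_measurable lborel" by (simp add: comp_def)
    have Kind: "(\<lambda>t. K t \<gamma>) = indicator {t\<in>{0..T}. \<gamma> t \<in> A}"
      by (auto simp: K_def indicator_def fun_eq_iff)
    have "{t\<in>{0..T}. \<gamma> t \<in> A} \<in> sets lborel"
      using m unfolding Kind borel_measurable_indicator_iff by simp
    then show ?thesis unfolding L_def Kind by simp
  qed
  have R_eq: "R t = indicator {0..T} t * emeasure (density lborel (\<lambda>x. indicator torus x * ennreal (\<rho> t x))) A" for t
  proof (cases "t \<in> {0..T}")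
    case True
    have S: "(\<lambda>\<gamma>. \<gamma> t) -` A \<inter> space \<eta> \<in> sets \<eta>"
      using measurable_sets[OF ev_meas[OF True] A_meas] .
    have "R t = (\<integral>\<^sup>+ \<gamma>. indicator ((\<lambda>\<gamma>. \<gamma> t) -` A \<inter> space \<eta>) \<gamma> \<partial>\<eta>)"
      unfolding R_def using True by (intro nn_integral_cong) (auto simp: K_def indicator_def)
    also have "\<dots> = emeasure \<eta> ((\<lambda>\<gamma>. \<gamma> t) -` A \<inter> space \<eta>)"
      using S by simp
    also have "\<dots> = emeasure (distr \<eta> borel (\<lambda>\<gamma>. \<gamma> t)) A"
      by (rule emeasure_distr[OF ev_meas[OF True] A_meas, symmetric])
    also have "\<dots> = emeasure (density lborel (\<lambda>x. indicator torus x * ennreal (\<rho> t x))) A"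
      using eta_marg True by simp
    finally show ?thesis using True by simp
  next
    case False
    then show ?thesis unfolding R_def K_def by simp
  qed
  have GA: "Gamma_A T A = {\<gamma> \<in> space \<eta>. L \<gamma> \<noteq> 0}"
    unfolding Gamma_A_def using L_eq by (auto simp: sp zero_less_iff_neq_zero)
  have GA_sets: "Gamma_A T A \<in> sets \<eta>"
    unfolding GA using L_meas by measurable
  show ?thesis
  proof
    assume A0: "emeasure lborel A = 0"
    have "R t = 0" for t
    proof -
      have "emeasure (density lborel (\<lambda>x. indicator torus x * ennreal (\<rho> t x))) A = 0"
      proof -
        have "A \<in> null_sets lborel" using A0 A_meas by auto
        from AE_not_in[OF this]
        have "AE x in lborel. indicator torus x * ennreal (\<rho> t x) * indicator A x = (0::ennreal)"
          by eventually_elim simp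
        then have "(\<integral>\<^sup>+ x. indicator torus x * ennreal (\<rho> t x) * indicator A x \<partial>lborel) = (\<integral>\<^sup>+ x. 0 \<partial>(lborel::(real\<times>real) measure))"
          by (rule nn_integral_cong_AE)
        then show ?thesis
          unfolding density_def emeasure_measure_of_conv by simp
      qed
      then show ?thesis using R_eq by simp
    qed
    then have "(\<integral>\<^sup>+ \<gamma>. L \<gamma> \<partial>\<eta>) = 0" using fub by simp
    then have "AE \<gamma> in \<eta>. L \<gamma> = 0" using nn_integral_0_iff_AE[OF L_meas] by simp
    then show "emeasure \<eta> (Gamma_A T A) = 0"
      using AE_iff_measurable[OF GA_sets] GA by auto
  next
    assume G0: "emeasure \<eta> (Gamma_A T A) = 0"
    then have "AE \<gamma> in \<eta>. L \<gamma> = 0"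
      using AE_iff_measurable[OF GA_sets] GA by auto
    then have "(\<integral>\<^sup>+ \<gamma>. L \<gamma> \<partial>\<eta>) = 0"
      by (simp add: nn_integral_0_iff_AE[OF L_meas])
    then have AER: "AE t in lborel. R t = 0"
      using fub nn_integral_0_iff_AE[OF R_meas] by simp
    show "emeasure lborel A = 0"
    proof (rule ccontr)
      assume Apos: "emeasure lborel A \<noteq> 0"
      obtain g where g_meas: "g \<in> borel_measurable lborel"
        and g_ae: "AE p in lborel. \<rho> (fst p) (snd p) = g p"
        using completion_ex_borel_measurable_real[OF rho_meas] by blast
      obtain C where C: "AE p in lborel. p \<in> {0<..<T} \<times> torus \<longrightarrow>
                         \<rho> (fst p) (snd p) > 0 \<and> \<bar>ln (\<rho> (fst p) (snd p))\<bar> \<le> C"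
        using ln_rho_Linf by blast
      have "AE p in (lborel \<Otimes>\<^sub>M lborel). (p \<in> {0<..<T} \<times> torus \<longrightarrow> g p > 0) \<and> \<rho> (fst p) (snd p) = g p"
        unfolding lborel_prod using C g_ae by eventually_elim auto
      from lborel_pair.AE_pair[OF this]
      have AE2: "AE t in lborel. AE x in lborel. ((t, x) \<in> {0<..<T} \<times> torus \<longrightarrow> g (t, x) > 0) \<and> \<rho> t x = g (t, x)"
        by simp
      have "AE t in lborel. t \<notin> {0<..<T}"
        using AE2 AER
      proof eventually_elim
        case (elim t)
        show ?case
        proof
          assume t: "t \<in> {0<..<T}"
          have gt: "(\<lambda>x. g (t, x)) \<in> borel_measurable lborel"
            using g_meas by measurable
          let ?f = "\<lambda>x. indicator torus x * ennreal (\<rho> t x)"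
          let ?f' = "\<lambda>x. indicator torus x * ennreal (g (t, x))"
          have "density lborel ?f = density lborel ?f'"
          proof -
            have "(\<lambda>B. \<integral>\<^sup>+ x. ?f x * indicator B x \<partial>lborel) = (\<lambda>B. \<integral>\<^sup>+ x. ?f' x * indicator B x \<partial>lborel)"
            proof
              fix B
              have e1: "AE x in lborel. \<rho> t x = g (t, x)" using elim(1) by eventually_elim auto
              have "AE x in lborel. ?f x * indicator B x = ?f' x * indicator B x"
                using e1 by eventually_elim simp
              then show "(\<integral>\<^sup>+ x. ?f x * indicator B x \<partial>lborel) = (\<integral>\<^sup>+ x. ?f' x * indicator B x \<partial>lborel)"
                by (rule nn_integral_cong_AE)
            qed
            then show ?thesis unfolding density_def by simp
          qed
          moreover have "R t = 0" using elim(2) .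
          ultimately have "emeasure (density lborel ?f') A = 0"
            using R_eq[of t] t by simp
          have f'm: "?f' \<in> borel_measurable lborel" using gt by measurable
          from \<open>emeasure (density lborel ?f') A = 0\<close>
          have "(\<integral>\<^sup>+ x. ?f' x * indicator A x \<partial>lborel) = 0"
            using emeasure_density[OF f'm, of A] A_meas by simp
          then have "AE x in lborel. ?f' x * indicator A x = 0"
            using nn_integral_0_iff_AE[of "\<lambda>x. ?f' x * indicator A x" lborel] f'm A_meas by simp
          then have "AE x in lborel. x \<notin> A"
            using elim(1)
          proof eventually_elim
            case (elim x)
            show ?case
            proof
              assume "x \<in> A"
              with A_sub have "x \<in> torus" by auto
              with t elim have "g (t, x) > 0" by auto
              with \<open>x \<in> A\<close> \<open>x \<in> torus\<close> elim(1) show False by simp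
            qed
          qed
          then have "emeasure lborel A = 0"
            using AE_iff_measurable[of A lborel "\<lambda>x. x \<notin> A"] A_meas by simp
          with Apos show False by simp
        qed
      qed
      then have "emeasure lborel {0<..<T} = 0"
        using AE_iff_measurable[of "{0<..<T}" lborel "\<lambda>t. t \<notin> {0<..<T}"] by (auto simp del: greaterThanLessThan_iff)
      with T_pos show False by simp
    qed
  qed
qed


end
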